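(* Let $p=p(n)=o\!\left(\frac1n\right)$. Then for all sufficiently large $n\in\mathbb{N}$ we have $u_2(n,p)=0$ and $u_2'(n,p)=0$.
   Context: $G(n,p)$ is the Erdős–Rényi random graph on $n$ labelled vertices (vertex set $V$), each edge present independently with probability $p=p(n)$; $\mathbb{P}_{n,p}$ is the corresponding probability and $q=1-p$. A diameter graph in $\mathbb{R}^d$ is a graph $(V,E)$ with $V\subset\mathbb{R}^d$ finite and $E=\{\{\mathbf{x},\mathbf{y}\}\subseteq V: |\mathbf{x}-\mathbf{y}|=\operatorname{diam}V\}$, where $\operatorname{diam}V=\max_{\mathbf{x},\mathbf{y}\in V}|\mathbf{x}-\mathbf{y}|$ (Euclidean norm); a graph is a diameter graph in $\mathbb{R}^d$ if it is isomorphic to one. $u_d(n,p)$ is the largest positive integer $k$ such that $\mathbb{P}_{n,p}\big(\exists W\subseteq V,\ |W|=k,\ G[W]$ is a diameter graph in $\mathbb{R}^d$ and $\chi(G[W])=d+1\big)>\frac12$, where $G[W]$ is the induced subgraph; if no such $k$ exists, $u_d(n,p)=0$. $u_d'(n,p)$ is defined identically with the additional requirement that $G[W]$ be connected. *)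

theory Defs
  imports Complex_Main "HOL-Library.Landau_Symbols"
begin

text \<open>Vertex set of G(n,p) is {0..<n}; a graph is a set of 2-element edges.\<close>

definition all_pairs :: "nat \<Rightarrow> nat set set" where
  "all_pairs n = {e. e \<subseteq> {0..<n} \<and> card e = 2}"

definition prob_gnp :: "nat \<Rightarrow> real \<Rightarrow> (nat set set \<Rightarrow> bool) \<Rightarrow> real" where
  "prob_gnp n p A =
     (\<Sum>E\<in>Pow (all_pairs n). if A E then p ^ card E * (1 - p) ^ (card (all_pairs n) - card E) else 0)"

definition induced :: "nat set set \<Rightarrow> nat set \<Rightarrow> nat set set" where
  "induced E W = {e \<in> E. e \<subseteq> W}"

text \<open>Euclidean distance in R^d, points represented as nat => real using the first d coordinates.\<close>
definition edist :: "nat \<Rightarrow> (nat \<Rightarrow> real) \<Rightarrow> (nat \<Rightarrow> real) \<Rightarrow> real" where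
  "edist d x y = sqrt (\<Sum>i<d. (x i - y i)^2)"

definition in_Rd :: "nat \<Rightarrow> (nat \<Rightarrow> real) \<Rightarrow> bool" where
  "in_Rd d x \<longleftrightarrow> (\<forall>i\<ge>d. x i = 0)"

text \<open>(W,F) is (isomorphic to) a diameter graph in R^d: there is an injective placement
  f of W into R^d such that the edges are exactly the pairs at distance diam (f ` W).\<close>
definition diameter_graph :: "nat \<Rightarrow> nat set \<Rightarrow> nat set set \<Rightarrow> bool" where
  "diameter_graph d W F \<longleftrightarrow>
     (\<exists>f. (\<forall>v\<in>W. in_Rd d (f v)) \<and> inj_on f W \<and>
       (\<forall>e. e \<in> F \<longleftrightarrow>
          (\<exists>x\<in>W. \<exists>y\<in>W. x \<noteq> y \<and> e = {x, y} \<and>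
             edist d (f x) (f y) = Max {edist d (f a) (f b) | a b. a \<in> W \<and> b \<in> W})))"

definition chromatic :: "nat set \<Rightarrow> nat set set \<Rightarrow> nat" where
  "chromatic W F = (LEAST k. \<exists>c::nat \<Rightarrow> nat. (\<forall>v\<in>W. c v < k) \<and>
                      (\<forall>e\<in>F. \<forall>x\<in>e. \<forall>y\<in>e. x \<noteq> y \<longrightarrow> c x \<noteq> c y))"

definition connected_graph :: "nat set \<Rightarrow> nat set set \<Rightarrow> bool" where
  "connected_graph W F \<longleftrightarrow>
     (\<forall>x\<in>W. \<forall>y\<in>W. (x, y) \<in> {(a, b). {a, b} \<in> F}\<^sup>*)"

definition good_event :: "bool \<Rightarrow> nat \<Rightarrow> nat \<Rightarrow> nat \<Rightarrow> nat set set \<Rightarrow> bool" where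
  "good_event conn d n k E \<longleftrightarrow>
     (\<exists>W. W \<subseteq> {0..<n} \<and> card W = k \<and>
        diameter_graph d W (induced E W) \<and> chromatic W (induced E W) = d + 1 \<and>
        (conn \<longrightarrow> connected_graph W (induced E W)))"

definition u_gen :: "bool \<Rightarrow> nat \<Rightarrow> nat \<Rightarrow> real \<Rightarrow> nat" where
  "u_gen conn d n p =
     (if \<exists>k>0. prob_gnp n p (good_event conn d n k) > 1/2
      then GREATEST k. k > 0 \<and> prob_gnp n p (good_event conn d n k) > 1/2
      else 0)"

definition u :: "nat \<Rightarrow> nat \<Rightarrow> real \<Rightarrow> nat" where
  "u d n p = u_gen False d n p"

definition u' :: "nat \<Rightarrow> nat \<Rightarrow> real \<Rightarrow> nat" where
  "u' d n p = u_gen True d n p"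

end

theory Submission
  imports Defs
begin


lemma all_pairs_finite: "finite (all_pairs n)"
  by (rule finite_subset[of _ "Pow {0..<n}"]) (auto simp: all_pairs_def)

lemma binom_subsets:
  fixes p q :: real
  assumes "finite Y"
  shows "(\<Sum>G\<in>Pow Y. p ^ card G * q ^ (card Y - card G)) = (p + q) ^ card Y"
  using assms
proof (induction Y rule: finite_induct)
  case empty then show ?case by simp
next
  case (insert a Y)
  have fin: "finite (Pow Y)" using insert by simp
  have disj: "Pow Y \<inter> insert a ` Pow Y = {}" using insert by auto
  have inj: "inj_on (insert a) (Pow Y)" using insert by (auto simp: inj_on_def) 
  have "(\<Sum>G\<in>Pow (insert a Y). p ^ card G * q ^ (card (insert a Y) - card G))
     = (\<Sum>G\<in>Pow Y. p ^ card G * q ^ (Suc (card Y) - card G))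
       + (\<Sum>G\<in>insert a ` Pow Y. p ^ card G * q ^ (Suc (card Y) - card G))"
    using insert fin disj by (simp add: Pow_insert sum.union_disjoint)
  also have "(\<Sum>G\<in>Pow Y. p ^ card G * q ^ (Suc (card Y) - card G))
       = q * (\<Sum>G\<in>Pow Y. p ^ card G * q ^ (card Y - card G))"
    unfolding sum_distrib_left
  proof (rule sum.cong)
    fix G assume "G \<in> Pow Y"
    then have "card G \<le> card Y" using insert by (simp add: card_mono)
    then have "Suc (card Y) - card G = Suc (card Y - card G)" by simp
    then show "p ^ card G * q ^ (Suc (card Y) - card G) = q * (p ^ card G * q ^ (card Y - card G))"
      by simp
  qed simp
  also have "(\<Sum>G\<in>insert a ` Pow Y. p ^ card G * q ^ (Suc (card Y) - card G))
       = (\<Sum>G\<in>Pow Y. p ^ card (insert a G) * q ^ (Suc (card Y) - card (insert a G)))"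
    by (simp add: sum.reindex[OF inj])
  also have "\<dots> = p * (\<Sum>G\<in>Pow Y. p ^ card G * q ^ (card Y - card G))"
    unfolding sum_distrib_left
  proof (rule sum.cong)
    fix G assume G: "G \<in> Pow Y"
    then have "finite G" "a \<notin> G" using insert finite_subset by auto
    then show "p ^ card (insert a G) * q ^ (Suc (card Y) - card (insert a G)) = p * (p ^ card G * q ^ (card Y - card G))"
      by simp
  qed simp
  finally show ?case using insert by (simp add: algebra_simps)
qed

lemma prob_subset:
  assumes F: "F \<subseteq> all_pairs n"
  shows "prob_gnp n p (\<lambda>E. F \<subseteq> E) = p ^ card F"
proof -
  let ?X = "all_pairs n"
  let ?N = "card ?X"
  have finX: "finite ?X" by (rule all_pairs_finite)
  have finF: "finite F" using F finX finite_subset by auto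
  have "prob_gnp n p (\<lambda>E. F \<subseteq> E) = (\<Sum>E\<in>{E\<in>Pow ?X. F \<subseteq> E}. p ^ card E * (1 - p) ^ (?N - card E))"
    unfolding prob_gnp_def by (simp add: sum.inter_filter[symmetric] finX)
  also have "{E\<in>Pow ?X. F \<subseteq> E} = (\<lambda>G. F \<union> G) ` Pow (?X - F)"
  proof
    show "{E\<in>Pow ?X. F \<subseteq> E} \<subseteq> (\<lambda>G. F \<union> G) ` Pow (?X - F)"
    proof
      fix E assume "E \<in> {E\<in>Pow ?X. F \<subseteq> E}"
      then have "E = F \<union> (E - F)" "E - F \<in> Pow (?X - F)" by auto
      then show "E \<in> (\<lambda>G. F \<union> G) ` Pow (?X - F)" by blast
    qed
  qed (use F in auto)
  also have "(\<Sum>E\<in>(\<lambda>G. F \<union> G) ` Pow (?X - F). p ^ card E * (1 - p) ^ (?N - card E))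
      = (\<Sum>G\<in>Pow (?X - F). p ^ card (F \<union> G) * (1 - p) ^ (?N - card (F \<union> G)))"
    by (rule sum.reindex_cong[where l="\<lambda>G. F \<union> G"]) (auto simp: inj_on_def)
  also have "\<dots> = (\<Sum>G\<in>Pow (?X - F). p ^ card F * (p ^ card G * (1 - p) ^ (card (?X - F) - card G)))"
  proof (rule sum.cong)
    fix G assume G: "G \<in> Pow (?X - F)"
    then have fG: "finite G" using finX finite_subset by (metis Diff_subset PowD finite_Diff)
    have "card (F \<union> G) = card F + card G" using G fG finF by (subst card_Un_disjoint) auto
    moreover have "card (?X - F) = ?N - card F" using F finF by (simp add: card_Diff_subset)
    ultimately show "p ^ card (F \<union> G) * (1 - p) ^ (?N - card (F \<union> G)) = p ^ card F * (p ^ card G * (1 - p) ^ (card (?X - F) - card G))"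
      by (simp add: power_add diff_diff_add)
  qed simp
  also have "\<dots> = p ^ card F"
    by (simp add: sum_distrib_left[symmetric] binom_subsets finX)
  finally show ?thesis .
qed

lemma prob_mono:
  assumes "0 \<le> p" "p \<le> 1" "\<And>E. E \<subseteq> all_pairs n \<Longrightarrow> A E \<Longrightarrow> B E"
  shows "prob_gnp n p A \<le> prob_gnp n p B"
  unfolding prob_gnp_def using assms by (intro sum_mono) auto

lemma prob_union:
  assumes "0 \<le> p" "p \<le> 1" "finite I"
  shows "prob_gnp n p (\<lambda>E. \<exists>i\<in>I. A i E) \<le> (\<Sum>i\<in>I. prob_gnp n p (A i))"
proof -
  have "prob_gnp n p (\<lambda>E. \<exists>i\<in>I. A i E) \<le>
     (\<Sum>E\<in>Pow (all_pairs n). \<Sum>i\<in>I. if A i E then p ^ card E * (1 - p) ^ (card (all_pairs n) - card E) else 0)"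
    unfolding prob_gnp_def
  proof (rule sum_mono)
    fix E :: "nat set set"
    let ?w = "p ^ card E * (1 - p) ^ (card (all_pairs n) - card E)"
    have w: "0 \<le> ?w" using assms by simp
    show "(if \<exists>i\<in>I. A i E then ?w else 0) \<le> (\<Sum>i\<in>I. if A i E then ?w else 0)"
    proof (cases "\<exists>i\<in>I. A i E")
      case True
      then obtain i where i: "i \<in> I" "A i E" by blast
      have "(if A i E then ?w else 0) \<le> (\<Sum>i\<in>I. if A i E then ?w else 0)"
        by (rule member_le_sum[OF i(1)]) (use w assms in auto)
      then show ?thesis using True i by simp
    next
      case False then show ?thesis using w by (simp add: sum_nonneg)
    qed
  qed
  also have "\<dots> = (\<Sum>i\<in>I. prob_gnp n p (A i))"
    unfolding prob_gnp_def by (rule sum.swap)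
  finally show ?thesis .
qed



lemma double_count:
  assumes "finite W" "finite F" "\<forall>e\<in>F. e \<subseteq> W"
  shows "(\<Sum>v\<in>W. card {e\<in>F. v \<in> e}) = (\<Sum>e\<in>F. card e)"
proof -
  have "(\<Sum>v\<in>W. card {e\<in>F. v \<in> e}) = (\<Sum>v\<in>W. \<Sum>e\<in>F. if v \<in> e then 1 else 0)"
  proof (rule sum.cong)
    fix v assume "v \<in> W"
    have "{e\<in>F. v \<in> e} = F \<inter> {e. v \<in> e}" by auto
    then show "card {e\<in>F. v \<in> e} = (\<Sum>e\<in>F. if v \<in> e then 1 else 0)"
      using assms by (simp add: sum.If_cases)
  qed simp
  also have "\<dots> = (\<Sum>e\<in>F. \<Sum>v\<in>W. if v \<in> e then 1 else 0)" by (rule sum.swap)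
  also have "\<dots> = (\<Sum>e\<in>F. card e)"
  proof (rule sum.cong)
    fix e assume "e \<in> F"
    then have "W \<inter> e = e" using assms by auto
    then show "(\<Sum>v\<in>W. if v \<in> e then 1 else 0) = card e"
      using assms by (simp add: sum.If_cases)
  qed simp
  finally show ?thesis .
qed

lemma low_degree:
  assumes "finite W" "W \<noteq> {}" "\<forall>e\<in>F. e \<subseteq> W \<and> card e = 2" "card F < card W"
  shows "\<exists>v\<in>W. card {e\<in>F. v \<in> e} \<le> 1"
proof (rule ccontr)
  assume "\<not> ?thesis"
  then have h: "\<forall>v\<in>W. 2 \<le> card {e\<in>F. v \<in> e}" by auto
  have fF: "finite F" using assms by (intro finite_subset[of F "Pow W"]) auto
  have "2 * card W = (\<Sum>v\<in>W. 2)" by simp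
  also have "\<dots> \<le> (\<Sum>v\<in>W. card {e\<in>F. v \<in> e})" using h by (intro sum_mono) auto
  also have "\<dots> = (\<Sum>e\<in>F. card e)" using assms fF by (intro double_count) auto
  also have "\<dots> = 2 * card F" using assms by simp
  finally show False using assms by simp
qed

lemma two_colour:
  assumes "finite W" "\<forall>e\<in>F. e \<subseteq> W \<and> card e = 2"
    "\<forall>S\<subseteq>W. S \<noteq> {} \<longrightarrow> card {e\<in>F. e \<subseteq> S} < card S"
  shows "\<exists>c::nat\<Rightarrow>nat. (\<forall>v\<in>W. c v < 2) \<and> (\<forall>e\<in>F. \<forall>x\<in>e. \<forall>y\<in>e. x \<noteq> y \<longrightarrow> c x \<noteq> c y)"
  using assms
proof (induction "card W" arbitrary: W F rule: less_induct)
  case less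
  show ?case
  proof (cases "W = {}")
    case True
    then have "F = {}" using less.prems by fastforce
    then show ?thesis by (intro exI[of _ "\<lambda>_. 0"]) auto
  next
    case False
    have "{e\<in>F. e \<subseteq> W} = F" using less.prems by auto
    moreover have "card {e\<in>F. e \<subseteq> W} < card W" using less.prems(3) False by blast
    ultimately have "card F < card W" by simp
    then obtain v where v: "v \<in> W" "card {e\<in>F. v \<in> e} \<le> 1"
      using low_degree[OF less.prems(1) False less.prems(2)] by blast
    define W' where "W' = W - {v}"
    define F' where "F' = {e\<in>F. e \<subseteq> W'}"
    have cW: "card W' < card W" unfolding W'_def by (rule card_Diff1_less[OF less.prems(1) v(1)])
    have fW': "finite W'" using less.prems(1) W'_def by simp
    have F'e: "\<forall>e\<in>F'. e \<subseteq> W' \<and> card e = 2" using less.prems(2) F'_def by auto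
    have F'h: "\<forall>S\<subseteq>W'. S \<noteq> {} \<longrightarrow> card {e\<in>F'. e \<subseteq> S} < card S"
    proof (intro allI impI)
      fix S assume S: "S \<subseteq> W'" "S \<noteq> {}"
      have "{e\<in>F'. e \<subseteq> S} = {e\<in>F. e \<subseteq> S}" using S F'_def by auto
      moreover have "S \<subseteq> W" using S W'_def by auto
      ultimately show "card {e\<in>F'. e \<subseteq> S} < card S" using less.prems(3) S by metis
    qed
    obtain c' :: "nat \<Rightarrow> nat" where c': "\<forall>v\<in>W'. c' v < 2"
      "\<forall>e\<in>F'. \<forall>x\<in>e. \<forall>y\<in>e. x \<noteq> y \<longrightarrow> c' x \<noteq> c' y"
      using less.hyps[OF cW fW' F'e F'h] by blast
    have Fsplit: "\<forall>e\<in>F. e \<in> F' \<or> v \<in> e" using F'_def W'_def less.prems(2) by auto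
    have fF: "finite F" using less.prems(1,2) by (intro finite_subset[of F "Pow W"]) auto
    show ?thesis
    proof (cases "{e\<in>F. v \<in> e} = {}")
      case True
      let ?c = "c'(v := 0)"
      have "\<forall>e\<in>F. \<forall>x\<in>e. \<forall>y\<in>e. x \<noteq> y \<longrightarrow> ?c x \<noteq> ?c y"
      proof (intro ballI impI)
        fix e x y assume e: "e \<in> F" "x \<in> e" "y \<in> e" "x \<noteq> y"
        then have "e \<in> F'" using True Fsplit by auto
        then have "v \<notin> e" "e \<subseteq> W'" using F'_def W'_def by auto
        then show "?c x \<noteq> ?c y" using c' e \<open>e \<in> F'\<close> by auto
      qed
      moreover have "\<forall>u\<in>W. ?c u < 2" using c' W'_def by auto
      ultimately show ?thesis by (intro exI[of _ ?c] conjI)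
    next
      case False
      have "finite {e\<in>F. v \<in> e}" using fF by simp
      then have "card {e\<in>F. v \<in> e} \<noteq> 0" using False by simp
      then have "card {e\<in>F. v \<in> e} = 1" using v(2) by linarith
      then obtain e0 where e0: "{e\<in>F. v \<in> e} = {e0}" by (metis card_1_singletonE)
      then have e0F: "e0 \<in> F" "v \<in> e0" by auto
      then have "card e0 = 2" using less.prems(2) by auto
      then obtain a b where ab: "e0 = {a, b}" "a \<noteq> b" by (auto simp: card_2_iff)
      obtain w where w: "e0 = {v, w}" "w \<noteq> v" using ab e0F by blast
      have "e0 \<subseteq> W" using less.prems(2) e0F(1) by blast
      then have wW': "w \<in> W'" using w W'_def by auto
      let ?c = "c'(v := 1 - c' w)"
      have "\<forall>e\<in>F. \<forall>x\<in>e. \<forall>y\<in>e. x \<noteq> y \<longrightarrow> ?c x \<noteq> ?c y"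
      proof (intro ballI impI)
        fix e x y assume e: "e \<in> F" "x \<in> e" "y \<in> e" "x \<noteq> y"
        show "?c x \<noteq> ?c y"
        proof (cases "v \<in> e")
          case True
          then have "e = {v, w}" using e0 e w by auto
          moreover have "c' w < 2" using c' wW' by auto
          moreover have "1 - c' w \<noteq> c' w" using \<open>c' w < 2\<close> by arith
          ultimately show ?thesis using e w by auto
        next
          case False
          then have "e \<in> F'" using Fsplit e by auto
          then show ?thesis using c' e False by auto
        qed
      qed
      moreover have "\<forall>u\<in>W. ?c u < 2" using c' W'_def by auto
      ultimately show ?thesis by (intro exI[of _ ?c] conjI)
    qed
  qed
qed

lemma chromatic_le2:
  assumes "finite W" "\<forall>e\<in>F. e \<subseteq> W \<and> card e = 2"
    "\<forall>S\<subseteq>W. S \<noteq> {} \<longrightarrow> card {e\<in>F. e \<subseteq> S} < card S"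
  shows "chromatic W F \<le> 2"
  using two_colour[OF assms] unfolding chromatic_def by (intro Least_le) blast




definition pairs_in :: "nat set \<Rightarrow> nat set set" where
  "pairs_in S = {e. e \<subseteq> S \<and> card e = 2}"

definition bad :: "nat \<Rightarrow> nat set set \<Rightarrow> bool" where
  "bad n E \<longleftrightarrow> (\<exists>S\<subseteq>{0..<n}. S \<noteq> {} \<and> card S \<le> card {e\<in>E. e \<subseteq> S})"

lemma good_imp_bad:
  assumes E: "E \<subseteq> all_pairs n" and g: "good_event conn 2 n k E"
  shows "bad n E"
proof (rule ccontr)
  assume nb: "\<not> bad n E"
  from g obtain W where W: "W \<subseteq> {0..<n}" "chromatic W (induced E W) = 3"
    unfolding good_event_def by auto
  have fW: "finite W" using W finite_subset by blast
  have e: "\<forall>e\<in>induced E W. e \<subseteq> W \<and> card e = 2"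
    using E unfolding induced_def all_pairs_def by auto
  have h: "\<forall>S\<subseteq>W. S \<noteq> {} \<longrightarrow> card {e\<in>induced E W. e \<subseteq> S} < card S"
  proof (intro allI impI)
    fix S assume S: "S \<subseteq> W" "S \<noteq> {}"
    have "{e\<in>induced E W. e \<subseteq> S} = {e\<in>E. e \<subseteq> S}" using S unfolding induced_def by auto
    moreover have "\<not> card S \<le> card {e\<in>E. e \<subseteq> S}" using nb S W unfolding bad_def by blast
    ultimately show "card {e\<in>induced E W. e \<subseteq> S} < card S" by simp
  qed
  have "chromatic W (induced E W) \<le> 2" by (rule chromatic_le2[OF fW e h])
  then show False using W by simp
qed

lemma bad_imp:
  assumes E: "E \<subseteq> all_pairs n" and b: "bad n E"
  shows "\<exists>m\<in>{1..n}. \<exists>S\<in>{S. S \<subseteq> {0..<n} \<and> card S = m}. \<exists>F\<in>{F. F \<subseteq> pairs_in S \<and> card F = m}. F \<subseteq> E"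
proof -
  from b obtain S where S: "S \<subseteq> {0..<n}" "S \<noteq> {}" "card S \<le> card {e\<in>E. e \<subseteq> S}"
    unfolding bad_def by blast
  have fS: "finite S" using S finite_subset by blast
  have "card S \<le> card {0..<n}" using S by (intro card_mono) auto
  then have m: "card S \<in> {1..n}" using S fS by (auto simp: Suc_le_eq card_gt_0_iff)
  obtain F where F: "F \<subseteq> {e\<in>E. e \<subseteq> S}" "card F = card S"
    using obtain_subset_with_card_n[OF S(3)] by metis
  have "F \<subseteq> pairs_in S" using F E unfolding pairs_in_def all_pairs_def by auto
  then show ?thesis using m S F by blast
qed

lemma finite_pairs_in: "finite S \<Longrightarrow> finite (pairs_in S)"
  by (rule finite_subset[of _ "Pow S"]) (auto simp: pairs_in_def)

lemma card_pairs_in: "finite S \<Longrightarrow> card (pairs_in S) = card S choose 2"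
  unfolding pairs_in_def by (rule n_subsets)

lemma pairs_in_sub: "S \<subseteq> {0..<n} \<Longrightarrow> pairs_in S \<subseteq> all_pairs n"
  unfolding pairs_in_def all_pairs_def by auto

lemma prob_bad:
  assumes "0 \<le> p" "p \<le> 1"
  shows "prob_gnp n p (bad n) \<le> (\<Sum>m\<in>{1..n}. real (n choose m) * real ((m choose 2) choose m) * p ^ m)"
proof -
  let ?Sm = "\<lambda>m. {S. S \<subseteq> {0..<n} \<and> card S = m}"
  let ?Fm = "\<lambda>S m. {F. F \<subseteq> pairs_in S \<and> card F = m}"
  have finS: "finite (?Sm m)" for m
    by (rule finite_subset[of _ "Pow {0..<n}"]) auto
  have finF: "finite S \<Longrightarrow> finite (?Fm S m)" for S m
    by (rule finite_subset[of _ "Pow (pairs_in S)"]) (auto simp: finite_pairs_in)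
  have "prob_gnp n p (bad n) \<le> prob_gnp n p (\<lambda>E. \<exists>m\<in>{1..n}. \<exists>S\<in>?Sm m. \<exists>F\<in>?Fm S m. F \<subseteq> E)"
    using assms bad_imp by (intro prob_mono) auto
  also have "\<dots> \<le> (\<Sum>m\<in>{1..n}. prob_gnp n p (\<lambda>E. \<exists>S\<in>?Sm m. \<exists>F\<in>?Fm S m. F \<subseteq> E))"
    using assms by (intro prob_union) auto
  also have "\<dots> \<le> (\<Sum>m\<in>{1..n}. \<Sum>S\<in>?Sm m. prob_gnp n p (\<lambda>E. \<exists>F\<in>?Fm S m. F \<subseteq> E))"
    using assms finS by (intro sum_mono prob_union) auto
  also have "\<dots> \<le> (\<Sum>m\<in>{1..n}. \<Sum>S\<in>?Sm m. \<Sum>F\<in>?Fm S m. prob_gnp n p (\<lambda>E. F \<subseteq> E))"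
  proof (intro sum_mono)
    fix m S assume "S \<in> ?Sm m"
    then have "finite S" using finite_subset by blast
    then show "prob_gnp n p (\<lambda>E. \<exists>F\<in>?Fm S m. F \<subseteq> E) \<le> (\<Sum>F\<in>?Fm S m. prob_gnp n p (\<lambda>E. F \<subseteq> E))"
      using assms finF by (intro prob_union) auto
  qed
  also have "\<dots> = (\<Sum>m\<in>{1..n}. \<Sum>S\<in>?Sm m. \<Sum>F\<in>?Fm S m. p ^ m)"
  proof (intro sum.cong refl)
    fix m S F assume S: "S \<in> ?Sm m" and F: "F \<in> ?Fm S m"
    then have "F \<subseteq> all_pairs n" using pairs_in_sub by blast
    then show "prob_gnp n p (\<lambda>E. F \<subseteq> E) = p ^ m" using F by (simp add: prob_subset)
  qed
  also have "\<dots> = (\<Sum>m\<in>{1..n}. real (n choose m) * real ((m choose 2) choose m) * p ^ m)"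
  proof (intro sum.cong refl)
    fix m
    have "(\<Sum>S\<in>?Sm m. \<Sum>F\<in>?Fm S m. p ^ m) = (\<Sum>S\<in>?Sm m. real ((m choose 2) choose m) * p ^ m)"
    proof (intro sum.cong refl)
      fix S assume S: "S \<in> ?Sm m"
      then have fS: "finite S" using finite_subset by blast
      have "card (?Fm S m) = (m choose 2) choose m"
        using n_subsets[OF finite_pairs_in[OF fS], of m] card_pairs_in[OF fS] S by simp
      then show "(\<Sum>F\<in>?Fm S m. p ^ m) = real ((m choose 2) choose m) * p ^ m" by simp
    qed
    also have "\<dots> = real (n choose m) * real ((m choose 2) choose m) * p ^ m"
      using n_subsets[of "{0..<n}" m] by simp
    finally show "(\<Sum>S\<in>?Sm m. \<Sum>F\<in>?Fm S m. p ^ m) = real (n choose m) * real ((m choose 2) choose m) * p ^ m" .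
  qed
  finally show ?thesis .
qed

lemma pow_fact_exp: "(real m)^m / fact m \<le> exp (real m)"
proof -
  have "(\<Sum>n\<in>{m}. real m ^ n /\<^sub>R fact n) \<le> (\<Sum>n. real m ^ n /\<^sub>R fact n)"
    by (rule sum_le_suminf[OF summable_exp_generic]) auto
  then show ?thesis by (simp add: exp_def divide_inverse mult.commute)
qed

lemma choose_real: "real (a choose m) \<le> real a ^ m / fact m"
proof -
  have "(a choose m) * fact m \<le> a ^ m" by (rule binomial_fact_pow)
  then have "real (a choose m) * fact m \<le> real a ^ m"
    by (metis of_nat_fact of_nat_le_iff of_nat_mult of_nat_power)
  then show ?thesis by (simp add: field_simps)
qed

lemma term_bound:
  assumes "0 \<le> p"
  shows "real (n choose m) * real ((m choose 2) choose m) * p ^ m \<le> (exp 2 * real n * p) ^ m"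
proof -
  have c2: "real (m choose 2) \<le> real m ^ 2"
    using binomial_fact_pow[of m 2] by (simp add: of_nat_le_iff[symmetric] del: of_nat_le_iff)
  have A: "real (n choose m) \<le> real n ^ m / fact m" by (rule choose_real)
  have "real ((m choose 2) choose m) \<le> real (m choose 2) ^ m / fact m" by (rule choose_real)
  also have "\<dots> \<le> (real m ^ 2) ^ m / fact m"
    using c2 by (intro divide_right_mono power_mono) auto
  finally have B: "real ((m choose 2) choose m) \<le> (real m ^ 2) ^ m / fact m" .
  have D: "real m ^ m / fact m \<le> exp (real m)" by (rule pow_fact_exp)
  have "real (n choose m) * real ((m choose 2) choose m) * p ^ m
      \<le> (real n ^ m / fact m) * ((real m ^ 2) ^ m / fact m) * p ^ m"
    using A B assms by (intro mult_mono mult_nonneg_nonneg) auto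
  also have "\<dots> = real n ^ m * (real m ^ m / fact m) * (real m ^ m / fact m) * p ^ m"
    by (simp add: power_mult[symmetric] power2_eq_square power_mult_distrib mult.commute)
  also have "\<dots> \<le> real n ^ m * exp (real m) * exp (real m) * p ^ m"
    using D assms by (intro mult_mono mult_nonneg_nonneg) auto
  also have "\<dots> = (exp 2 * real n * p) ^ m"
    by (simp add: power_mult_distrib exp_of_nat_mult[symmetric] exp_add[symmetric])
  finally show ?thesis .
qed

lemma geom_bound:
  fixes x :: real
  assumes "0 \<le> x" "x < 1"
  shows "(\<Sum>m\<in>{1..n}. x ^ m) \<le> x / (1 - x)"
proof -
  have "(1 - x) * (\<Sum>m\<in>{1..n}. x ^ m) = x - x ^ Suc n"
  proof (induction n)
    case 0 then show ?case by simp
  next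
    case (Suc n)
    have "(\<Sum>m\<in>{1..Suc n}. x ^ m) = (\<Sum>m\<in>{1..n}. x ^ m) + x ^ Suc n" by simp
    then have "(1 - x) * (\<Sum>m\<in>{1..Suc n}. x ^ m) = (1 - x) * (\<Sum>m\<in>{1..n}. x ^ m) + (1 - x) * x ^ Suc n"
      by (simp add: distrib_left)
    also have "\<dots> = x - x ^ Suc (Suc n)" using Suc by (simp add: algebra_simps)
    finally show ?case .
  qed
  then have "(1 - x) * (\<Sum>m\<in>{1..n}. x ^ m) \<le> x" using assms by simp
  then show ?thesis using assms by (simp add: field_simps mult.commute)
qed



lemma prob_good_small:
  assumes "0 \<le> p" "p \<le> 1" "exp 2 * real n * p \<le> 1/8"
  shows "prob_gnp n p (good_event conn 2 n k) \<le> 1/7"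
proof -
  let ?x = "exp 2 * real n * p"
  have x0: "0 \<le> ?x" using assms by simp
  have "prob_gnp n p (good_event conn 2 n k) \<le> prob_gnp n p (bad n)"
    using assms good_imp_bad by (intro prob_mono) auto
  also have "\<dots> \<le> (\<Sum>m\<in>{1..n}. real (n choose m) * real ((m choose 2) choose m) * p ^ m)"
    using assms(1,2) by (rule prob_bad)
  also have "\<dots> \<le> (\<Sum>m\<in>{1..n}. ?x ^ m)"
    using assms by (intro sum_mono term_bound) auto
  also have "\<dots> \<le> ?x / (1 - ?x)" using x0 assms by (intro geom_bound) auto
  also have "\<dots> \<le> 1/7" using x0 assms by (simp add: field_simps)
  finally show ?thesis .
qed

lemma u_gen_zero:
  assumes "0 \<le> p" "p \<le> 1" "exp 2 * real n * p \<le> 1/8"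
  shows "u_gen conn 2 n p = 0"
proof -
  have "\<not> (\<exists>k>0. prob_gnp n p (good_event conn 2 n k) > 1/2)"
  proof
    assume "\<exists>k>0. prob_gnp n p (good_event conn 2 n k) > 1/2"
    then obtain k where k: "prob_gnp n p (good_event conn 2 n k) > 1/2" by blast
    have "prob_gnp n p (good_event conn 2 n k) \<le> 1/7" by (rule prob_good_small[OF assms])
    then show False using k by linarith
  qed
  then show ?thesis unfolding u_gen_def by (rule if_not_P)
qed

theorem theorem13:
  fixes p :: "nat \<Rightarrow> real"
  assumes "\<And>n. 0 \<le> p n \<and> p n \<le> 1"
    and "p \<in> o(\<lambda>n. 1 / real n)"
  shows "\<forall>\<^sub>F n in sequentially. u 2 n (p n) = 0 \<and> u' 2 n (p n) = 0"
proof -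
  have c: "0 < 1 / (8 * exp (2::real))" by simp
  have ev: "\<forall>\<^sub>F n in sequentially. norm (p n) \<le> 1 / (8 * exp 2) * norm (1 / real n)"
    using landau_o.smallD[OF assms(2) c] .
  show ?thesis
    using ev eventually_gt_at_top[of 0]
  proof eventually_elim
    case (elim n)
    have pn: "0 \<le> p n" "p n \<le> 1" using assms(1) by auto
    have "p n \<le> 1 / (8 * exp 2) * (1 / real n)" using elim pn by simp
    then have "real n * p n \<le> 1 / (8 * exp 2)" using elim by (simp add: field_simps)
    then have "exp 2 * (real n * p n) \<le> exp 2 * (1 / (8 * exp 2))"
      by (intro mult_left_mono) auto
    then have x: "exp 2 * real n * p n \<le> 1/8" by (simp add: mult.assoc)
    show ?case unfolding u_def u'_def using u_gen_zero[OF pn x] by simp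
  qed
qed


end
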